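(* For every $n\ge0$, $Mlt_l(Q_n)\cong Mlt_r(Q_n)$.
   Context: Cayley--Dickson loops: $Q_0=\{1,-1\}\subset\mathbb{R}$ with conjugation $x^*=x$. For $n\ge1$, $Q_n=\{(x,0),(x,1)\mid x\in Q_{n-1}\}$ with multiplication $(x,0)(y,0)=(xy,0)$, $(x,0)(y,1)=(yx,1)$, $(x,1)(y,0)=(xy^*,1)$, $(x,1)(y,1)=(-y^*x,0)$ and conjugation $(x,0)^*=(x^*,0)$, $(x,1)^*=(-x,1)$, where $-(x,a)=(-x,a)$. $Q_n$ is a loop with neutral element $1=(1,0,\dots,0)$. For a loop $Q$, $L_x(a)=xa$, $R_x(a)=ax$, $Mlt_l(Q)=\langle L_x\mid x\in Q\rangle$, $Mlt_r(Q)=\langle R_x\mid x\in Q\rangle$. *)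

theory Defs
  imports "HOL-Algebra.Algebra"
begin

(* The element (x, a) of Q_n with x = (r, bs) in Q_(n-1) is (r, a # bs);
   False encodes 0 and True encodes 1. *)
type_synonym cd = "int \<times> bool list"

definition Q :: "nat \<Rightarrow> cd set" where
  "Q n = {(r, bs). (r = 1 \<or> r = -1) \<and> length bs = n}"

definition cd_neg :: "cd \<Rightarrow> cd" where
  "cd_neg x = (- fst x, snd x)"

definition cd_pair :: "cd \<Rightarrow> bool \<Rightarrow> cd" where
  "cd_pair x a = (fst x, a # snd x)"

fun cd_conj :: "cd \<Rightarrow> cd" where
  "cd_conj (r, []) = (r, [])"
| "cd_conj (r, False # bs) = cd_pair (cd_conj (r, bs)) False"
| "cd_conj (r, True # bs) = (- r, True # bs)"

lemma length_cd_conj [simp]: "length (snd (cd_conj x)) = length (snd x)"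
  by (induction x rule: cd_conj.induct) (auto simp: cd_pair_def)

function cd_mult :: "cd \<Rightarrow> cd \<Rightarrow> cd" where
  "cd_mult (r, []) (s, []) = (r * s, [])"
| "cd_mult (r, a # as) (s, b # bs) =
     (let x = (r, as); y = (s, bs) in
      if \<not> a \<and> \<not> b then cd_pair (cd_mult x y) False
      else if \<not> a \<and> b then cd_pair (cd_mult y x) True
      else if a \<and> \<not> b then cd_pair (cd_mult x (cd_conj y)) True
      else cd_pair (cd_neg (cd_mult (cd_conj y) x)) False)"
| "cd_mult (r, []) (s, b # bs) = (r, [])"
| "cd_mult (r, a # as) (s, []) = (r, a # as)"
  by pat_completeness auto
termination
  by (relation "measure (\<lambda>(x, y). length (snd x) + length (snd y))") auto

definition L :: "nat \<Rightarrow> cd \<Rightarrow> (cd \<Rightarrow> cd)" where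
  "L n x = (\<lambda>a\<in>Q n. cd_mult x a)"

definition R :: "nat \<Rightarrow> cd \<Rightarrow> (cd \<Rightarrow> cd)" where
  "R n x = (\<lambda>a\<in>Q n. cd_mult a x)"

definition Mlt_l :: "nat \<Rightarrow> (cd \<Rightarrow> cd) monoid" where
  "Mlt_l n = subgroup_generated (BijGroup (Q n)) (L n ` Q n)"

definition Mlt_r :: "nat \<Rightarrow> (cd \<Rightarrow> cd) monoid" where
  "Mlt_r n = subgroup_generated (BijGroup (Q n)) (R n ` Q n)"

end

theory Submission imports Defs begin

lemma conj_neg: "cd_conj (cd_neg x) = cd_neg (cd_conj x)"
  by (induction x rule: cd_conj.induct) (auto simp: cd_neg_def cd_pair_def)

lemma conj_conj: "cd_conj (cd_conj x) = x"
  by (induction x rule: cd_conj.induct) (auto simp: cd_pair_def)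

lemma neg_neg[simp]: "cd_neg (cd_neg x) = x" by (simp add: cd_neg_def)

lemma len_mult: "length (snd x) = length (snd y) \<Longrightarrow> length (snd (cd_mult x y)) = length (snd x)"
  by (induction x y rule: cd_mult.induct) (auto simp: cd_pair_def cd_neg_def Let_def)

lemma fst_conj: "fst (cd_conj x) = fst x \<or> fst (cd_conj x) = - fst x"
  by (induction x rule: cd_conj.induct) (auto simp: cd_pair_def)

lemma conj_neg': "cd_conj (-s, bs) = (- fst (cd_conj (s,bs)), snd (cd_conj (s,bs)))"
  using conj_neg[of "(s,bs)"] by (simp add: cd_neg_def)

lemma neg_pair: "cd_neg (cd_pair x a) = cd_pair (cd_neg x) a"
  by (simp add: cd_neg_def cd_pair_def)

lemma neg_cons: "(- r, as) = cd_neg (r, as)" by (simp add: cd_neg_def)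

lemma mult_neg: "length (snd x) = length (snd y) \<Longrightarrow>
   cd_mult (cd_neg x) y = cd_neg (cd_mult x y) \<and> cd_mult x (cd_neg y) = cd_neg (cd_mult x y)"
proof (induction x y rule: cd_mult.induct)
  case (1 r s)
  then show ?case by (simp add: cd_neg_def)
next
  case (2 r a as s b bs)
  have l: "length as = length bs" using 2 by simp
  have i1: "\<not>a \<Longrightarrow> \<not>b \<Longrightarrow> cd_mult (cd_neg (r,as)) (s,bs) = cd_neg (cd_mult (r,as) (s,bs)) \<and> cd_mult (r,as) (cd_neg (s,bs)) = cd_neg (cd_mult (r,as) (s,bs))"
    using 2(1) l by simp
  have i2: "\<not>a \<Longrightarrow> b \<Longrightarrow> cd_mult (cd_neg (s,bs)) (r,as) = cd_neg (cd_mult (s,bs) (r,as)) \<and> cd_mult (s,bs) (cd_neg (r,as)) = cd_neg (cd_mult (s,bs) (r,as))"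
    using 2(2) l by simp
  have i3: "a \<Longrightarrow> \<not>b \<Longrightarrow> cd_mult (cd_neg (r,as)) (cd_conj (s,bs)) = cd_neg (cd_mult (r,as) (cd_conj (s,bs))) \<and> cd_mult (r,as) (cd_neg (cd_conj (s,bs))) = cd_neg (cd_mult (r,as) (cd_conj (s,bs)))"
    using 2(3) l by simp
  have i4: "a \<Longrightarrow> b \<Longrightarrow> cd_mult (cd_neg (cd_conj (s,bs))) (r,as) = cd_neg (cd_mult (cd_conj (s,bs)) (r,as)) \<and> cd_mult (cd_conj (s,bs)) (cd_neg (r,as)) = cd_neg (cd_mult (cd_conj (s,bs)) (r,as))"
    using 2(4) l by simp
  show ?case using i1 i2 i3 i4
    by (auto simp: Let_def cd_neg_def cd_pair_def conj_neg')
qed auto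

lemma conj_mult: "length (snd x) = length (snd y) \<Longrightarrow> cd_conj (cd_mult x y) = cd_mult (cd_conj y) (cd_conj x)"
proof (induction x y rule: cd_mult.induct)
  case (2 r a as s b bs)
  have l: "length as = length bs" using 2 by simp
  have i1: "\<not>a \<Longrightarrow> \<not>b \<Longrightarrow> cd_conj (cd_mult (r,as) (s,bs)) = cd_mult (cd_conj (s,bs)) (cd_conj (r,as))"
    using 2(1) l by simp
  have i2: "\<not>a \<Longrightarrow> b \<Longrightarrow> cd_conj (cd_mult (s,bs) (r,as)) = cd_mult (cd_conj (r,as)) (cd_conj (s,bs))"
    using 2(2) l by simp
  have i3: "a \<Longrightarrow> \<not>b \<Longrightarrow> cd_conj (cd_mult (r,as) (cd_conj (s,bs))) = cd_mult (s,bs) (cd_conj (r,as))"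
    using 2(3) l by (simp add: conj_conj)
  have i4: "a \<Longrightarrow> b \<Longrightarrow> cd_conj (cd_mult (cd_conj (s,bs)) (r,as)) = cd_mult (cd_conj (r,as)) (s,bs)"
    using 2(4) l by (simp add: conj_conj)
  note m1 = mult_neg[of "(s,bs)" "(r,as)"] and m2 = mult_neg[of "cd_conj (r,as)" "(s,bs)"]
   and m3 = mult_neg[of "(r,as)" "cd_conj (s,bs)"]
  have m4: "cd_mult (- fst (cd_conj (r, as)), snd (cd_conj (r, as))) (- s, bs) = cd_mult (cd_conj (r,as)) (s,bs)"
  proof -
    have "cd_mult (cd_neg (cd_conj (r, as))) (cd_neg (s, bs)) = cd_mult (cd_conj (r,as)) (s,bs)"
      using mult_neg[of "cd_neg (cd_conj (r,as))" "(s,bs)"] m2 l by (simp add: cd_neg_def)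
    then show ?thesis by (simp add: cd_neg_def)
  qed
  show ?case using i1 i2 i3 i4 m1 m2 m3 m4 l
    by (auto simp: Let_def cd_neg_def cd_pair_def conj_neg' conj_conj)
qed auto


lemma conj_Q: "x \<in> Q n \<Longrightarrow> cd_conj x \<in> Q n"
  using fst_conj[of x] length_cd_conj[of x] by (cases "cd_conj x") (auto simp: Q_def)

lemma anti: "a \<in> Q n \<Longrightarrow> x \<in> Q n \<Longrightarrow> cd_conj (cd_mult x (cd_conj a)) = cd_mult a (cd_conj x)"
  by (subst conj_mult) (auto simp: Q_def conj_conj)

definition phi :: "nat \<Rightarrow> (cd \<Rightarrow> cd) \<Rightarrow> (cd \<Rightarrow> cd)" where
  "phi n f = (\<lambda>a\<in>Q n. cd_conj (f (cd_conj a)))"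

lemma bij_conj: "bij_betw cd_conj (Q n) (Q n)"
  by (rule bij_betw_byWitness[where f'=cd_conj]) (auto simp: conj_conj conj_Q)

lemma phi_Bij: "f \<in> Bij (Q n) \<Longrightarrow> phi n f \<in> Bij (Q n)"
proof -
  assume f: "f \<in> Bij (Q n)"
  have b: "bij_betw f (Q n) (Q n)" using f by (simp add: Bij_def)
  have "bij_betw (cd_conj \<circ> (f \<circ> cd_conj)) (Q n) (Q n)"
    using bij_betw_trans[OF bij_betw_trans[OF bij_conj b] bij_conj] by simp
  then have "bij_betw (phi n f) (Q n) (Q n)"
    by (rule bij_betw_cong[THEN iffD1, rotated]) (simp add: phi_def)
  then show ?thesis by (simp add: Bij_def phi_def)
qed

lemma phi_phi: "f \<in> extensional (Q n) \<Longrightarrow> phi n (phi n f) = f"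
  by (rule ext) (auto simp: phi_def conj_conj conj_Q extensional_def)

lemma phi_hom: "phi n \<in> hom (BijGroup (Q n)) (BijGroup (Q n))"
proof (rule homI)
  fix f assume "f \<in> carrier (BijGroup (Q n))"
  then show "phi n f \<in> carrier (BijGroup (Q n))" by (simp add: BijGroup_def phi_Bij)
next
  fix f g assume f: "f \<in> carrier (BijGroup (Q n))" and g: "g \<in> carrier (BijGroup (Q n))"
  then have fB: "f \<in> Bij (Q n)" and gB: "g \<in> Bij (Q n)" by (auto simp: BijGroup_def)
  have "phi n (compose (Q n) f g) = compose (Q n) (phi n f) (phi n g)"
  proof (rule ext)
    fix a show "phi n (compose (Q n) f g) a = compose (Q n) (phi n f) (phi n g) a"
    proof (cases "a \<in> Q n")
      case True
      have 1: "cd_conj a \<in> Q n" using True conj_Q by blast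
      have 2: "g (cd_conj a) \<in> Q n" using 1 Bij_imp_funcset[OF gB] by blast
      have 3: "cd_conj (g (cd_conj a)) \<in> Q n" using 2 conj_Q by blast
      show ?thesis using True 1 2 3 by (simp add: phi_def compose_def conj_conj)
    qed (simp add: phi_def compose_def)
  qed
  then show "phi n (f \<otimes>\<^bsub>BijGroup (Q n)\<^esub> g) = phi n f \<otimes>\<^bsub>BijGroup (Q n)\<^esub> phi n g"
    using fB gB phi_Bij[OF fB] phi_Bij[OF gB] by (simp add: BijGroup_def compose_Bij)
qed

lemma phi_iso: "phi n \<in> iso (BijGroup (Q n)) (BijGroup (Q n))"
proof -
  have img: "phi n ` Bij (Q n) = Bij (Q n)"
  proof
    show "phi n ` Bij (Q n) \<subseteq> Bij (Q n)" using phi_Bij by auto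
    show "Bij (Q n) \<subseteq> phi n ` Bij (Q n)"
    proof
      fix f assume "f \<in> Bij (Q n)"
      then show "f \<in> phi n ` Bij (Q n)"
        using phi_phi[of f n] phi_Bij[of f n] Bij_imp_extensional by (metis imageI)
    qed
  qed
  have "inj_on (phi n) (Bij (Q n))"
    by (rule inj_on_inverseI[where g="phi n"]) (simp add: phi_phi Bij_imp_extensional)
  then show ?thesis using phi_hom img by (simp add: iso_iff BijGroup_def)
qed

lemma phi_L: "x \<in> Q n \<Longrightarrow> phi n (L n x) = R n (cd_conj x)"
  by (rule ext) (auto simp: phi_def L_def R_def conj_Q anti)

lemma phi_img: "phi n ` (carrier (BijGroup (Q n)) \<inter> L n ` Q n) = carrier (BijGroup (Q n)) \<inter> R n ` Q n"
proof
  show "phi n ` (carrier (BijGroup (Q n)) \<inter> L n ` Q n) \<subseteq> carrier (BijGroup (Q n)) \<inter> R n ` Q n"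
    using phi_L phi_Bij conj_Q by (fastforce simp: BijGroup_def)
next
  show "carrier (BijGroup (Q n)) \<inter> R n ` Q n \<subseteq> phi n ` (carrier (BijGroup (Q n)) \<inter> L n ` Q n)"
  proof
    fix g assume g: "g \<in> carrier (BijGroup (Q n)) \<inter> R n ` Q n"
    then obtain y where y: "y \<in> Q n" "g = R n y" by auto
    have e: "g = phi n (L n (cd_conj y))" using y phi_L[of "cd_conj y" n] conj_Q conj_conj by metis
    have "L n (cd_conj y) = phi n g"
      using e phi_phi[of "L n (cd_conj y)" n] by (simp add: L_def)
    then have "L n (cd_conj y) \<in> carrier (BijGroup (Q n))"
      using g phi_Bij by (auto simp: BijGroup_def)
    then show "g \<in> phi n ` (carrier (BijGroup (Q n)) \<inter> L n ` Q n)"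
      using e y conj_Q by blast
  qed
qed

lemma sg_int: "subgroup_generated G (carrier G \<inter> S) = subgroup_generated G S"
  by (simp add: subgroup_generated_def Int_assoc)

theorem mainTheorem11:
  shows "\<forall>n::nat. Mlt_l n \<cong> Mlt_r n"
proof
  fix n
  interpret gh: group_hom "BijGroup (Q n)" "BijGroup (Q n)" "phi n"
    using phi_hom by (simp add: group_hom_def group_hom_axioms_def group_BijGroup)
  have "phi n \<in> iso (subgroup_generated (BijGroup (Q n)) (carrier (BijGroup (Q n)) \<inter> L n ` Q n))
                  (subgroup_generated (BijGroup (Q n)) (carrier (BijGroup (Q n)) \<inter> R n ` Q n))"
    by (rule gh.iso_between_subgroups[OF phi_iso _ phi_img]) auto
  then show "Mlt_l n \<cong> Mlt_r n"
    unfolding Mlt_l_def Mlt_r_def is_iso_def sg_int by blast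
qed

end
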